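(* Let $n\ge2$, $A\in\mathbb{R}^{n\times n}$ symmetric with largest and smallest eigenvalues $\lambda_1,\lambda_n$, $\rho=\lambda_1-\lambda_n$, $\beta>0$, and $f(\mathbf{z})=\frac12\mathbf{z}^TA\mathbf{z}+\frac{\beta}{2}\sum_kz_k^4$. If $\beta>\rho n^2$, then $f$ has at least $2^n$ local minimizers on $\mathbb{S}^{n-1}$. If $\beta>\frac{18n^3}{n-1}\rho$, then $f$ has exactly $2^n$ local minimizers on $\mathbb{S}^{n-1}$.
   Context: $\mathbb{S}^{n-1}$ is the unit sphere in $\mathbb{R}^n$. *)

theory Defs
  imports "HOL-Analysis.Analysis"
begin

definition mat_eigenvalue :: "real^'n^'n \<Rightarrow> real \<Rightarrow> bool" where
  "mat_eigenvalue A l \<longleftrightarrow> (\<exists>v. v \<noteq> 0 \<and> A *v v = l *\<^sub>R v)"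

definition lambda_max :: "real^'n^'n \<Rightarrow> real" where
  "lambda_max A = Max {l. mat_eigenvalue A l}"

definition lambda_min :: "real^'n^'n \<Rightarrow> real" where
  "lambda_min A = Min {l. mat_eigenvalue A l}"

definition quartic_obj :: "real^'n^'n \<Rightarrow> real \<Rightarrow> real^'n \<Rightarrow> real" where
  "quartic_obj A \<beta> z = 1/2 * (z \<bullet> (A *v z)) + \<beta>/2 * (\<Sum>k\<in>UNIV. (z $ k) ^ 4)"

definition local_minimizers_on :: "('a::metric_space \<Rightarrow> real) \<Rightarrow> 'a set \<Rightarrow> 'a set" where
  "local_minimizers_on g S =
     {z \<in> S. \<exists>\<epsilon>>0. \<forall>w\<in>S. dist w z < \<epsilon> \<longrightarrow> g z \<le> g w}"

end

theory Submission
  imports Defs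
begin

lemma mat_mult_vec: "mat c *v (x::real^'n) = c *\<^sub>R x"
proof -
  have "(\<Sum>j\<in>UNIV. (if i = j then c else 0) * x $ j) = c * x $ i" for i
  proof -
    have "(\<Sum>j\<in>UNIV. (if i = j then c else 0) * x $ j) = (\<Sum>j\<in>UNIV. (if i = j then c * x $ j else 0))"
      by (rule sum.cong) auto
    then show ?thesis by simp
  qed
  then show ?thesis by (simp add: vec_eq_iff matrix_vector_mult_def mat_def)
qed

lemma transpose_diff: "transpose (A - B) = transpose A - transpose (B::real^'n^'m)"
  by (simp add: vec_eq_iff transpose_def)

lemma sym_inner:
  fixes A :: "real^'n^'n"
  assumes "transpose A = A"
  shows "x \<bullet> (A *v y) = y \<bullet> (A *v x)"
proof -
  have "x \<bullet> (A *v y) = (x v* A) \<bullet> y" by (simp add: dot_lmul_matrix)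
  also have "x v* A = A *v x" using vector_transpose_matrix[of x A] assms by simp
  finally show ?thesis by (simp add: inner_commute)
qed

lemma aux: assumes "(a::real) + 2*t*b + t^2*c \<le> a*(1 + 2*t*d + t^2*(a*d - b))" "yy = a*d - b"
  shows "0 \<le> 2*yy*t + (a*yy - c)*t^2 + 0*t^3 + 0*t^4"
proof -
  have "2*yy*t + (a*yy - c)*t^2 + 0*t^3 + 0*t^4 = a*(1 + 2*t*d + t^2*(a*d - b)) - (a + 2*t*b + t^2*c)"
    unfolding assms(2) by (simp add: algebra_simps)
  then show ?thesis using assms(1) by linarith
qed

lemma poly_local:
  fixes c1 c2 c3 c4 :: real
  assumes ev: "eventually (\<lambda>t. 0 \<le> c1*t + c2*t^2 + c3*t^3 + c4*t^4) (at 0)"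
  shows "c1 = 0 \<and> 0 \<le> c2"
proof -
  have lim1: "((\<lambda>t. c1 + c2*t + c3*t^2 + c4*t^3) \<longlongrightarrow> c1) (at 0 within X)" for X
    by (rule tendsto_eq_intros refl | simp)+
  have eq1: "c1*t + c2*t^2 + c3*t^3 + c4*t^4 = t * (c1 + c2*t + c3*t^2 + c4*t^3)" for t
    by (simp add: algebra_simps power2_eq_square power3_eq_cube power4_eq_xxxx)
  have evr: "eventually (\<lambda>t. 0 \<le> c1*t + c2*t^2 + c3*t^3 + c4*t^4) (at_right 0)"
    using ev by (rule filter_leD[OF at_le, rotated]) simp
  have evl: "eventually (\<lambda>t. 0 \<le> c1*t + c2*t^2 + c3*t^3 + c4*t^4) (at_left 0)"
    using ev by (rule filter_leD[OF at_le, rotated]) simp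
  have "eventually (\<lambda>t. 0 \<le> c1 + c2*t + c3*t^2 + c4*t^3) (at_right 0)"
    using evr eventually_at_right_less[of 0]
  proof (eventually_elim)
    case (elim t) then show ?case using eq1[of t] by (simp add: zero_le_mult_iff)
  qed
  then have a: "0 \<le> c1" by (rule tendsto_lowerbound[OF lim1]) simp
  have "eventually (\<lambda>t. c1 + c2*t + c3*t^2 + c4*t^3 \<le> 0) (at_left 0)"
    using evl eventually_at_left_real[where a=0 and b="-1", simplified]
  proof (eventually_elim)
    case (elim t) then show ?case using eq1[of t] by (simp add: zero_le_mult_iff)
  qed
  then have b: "c1 \<le> 0" by (rule tendsto_upperbound[OF lim1]) simp
  from a b have c10: "c1 = 0" by simp
  have lim2: "((\<lambda>t. c2 + c3*t + c4*t^2) \<longlongrightarrow> c2) (at 0)"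
    by (rule tendsto_eq_intros refl | simp)+
  have eq2: "c2*t^2 + c3*t^3 + c4*t^4 = t^2 * (c2 + c3*t + c4*t^2)" for t
    by (simp add: algebra_simps power2_eq_square power3_eq_cube power4_eq_xxxx)
  have "eventually (\<lambda>t. 0 \<le> c2 + c3*t + c4*t^2) (at 0)"
    using ev eventually_at[of "\<lambda>t. t \<noteq> 0" 0] 
  proof -
    have "eventually (\<lambda>t. t \<noteq> (0::real)) (at 0)" by (simp add: eventually_at_filter)
    with ev show ?thesis
    proof (eventually_elim)
      case (elim t)
      then have "0 \<le> t^2 * (c2 + c3*t + c4*t^2)" using eq2[of t] c10 by simp
      moreover have "t^2 > 0" using elim by simp
      ultimately show ?case by (simp add: zero_le_mult_iff)
    qed
  qed
  then have "0 \<le> c2" by (rule tendsto_lowerbound[OF lim2]) simp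
  with c10 show ?thesis by simp
qed



lemma quad_expand:
  fixes A :: "real^'n^'n"
  assumes "transpose A = A"
  shows "(z + t *\<^sub>R y) \<bullet> (A *v (z + t *\<^sub>R y)) = z \<bullet> (A *v z) + 2*t*(y \<bullet> (A *v z)) + t^2 * (y \<bullet> (A *v y))"
  using sym_inner[OF assms, of z y]
  by (simp add: matrix_vector_right_distrib matrix_vector_mult_scaleR inner_add_left inner_add_right
      algebra_simps power2_eq_square)

lemma rayleigh_max:
  fixes A :: "real^'n^'n"
  assumes sym: "transpose A = A"
  shows "\<exists>z. norm z = 1 \<and> (\<forall>x. norm x = 1 \<longrightarrow> x \<bullet> (A *v x) \<le> z \<bullet> (A *v z)) \<and> A *v z = (z \<bullet> (A *v z)) *\<^sub>R z"
proof -
  obtain i :: 'n where True by simp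
  have ne: "sphere (0::real^'n) 1 \<noteq> {}" using norm_axis_1[of i] by (auto intro!: exI[of _ "axis i 1"])
  have cont: "continuous_on (sphere 0 1) (\<lambda>x::real^'n. x \<bullet> (A *v x))"
    by (intro continuous_intros)
  obtain z where z: "z \<in> sphere 0 1" and zmax: "\<And>x. x \<in> sphere 0 1 \<Longrightarrow> x \<bullet> (A *v x) \<le> z \<bullet> (A *v z)"
    using continuous_attains_sup[OF compact_sphere ne cont] by blast
  define l where "l = z \<bullet> (A *v z)"
  have nz: "norm z = 1" using z by simp
  have zz: "z \<bullet> z = 1" using nz by (simp add: dot_square_norm)
  have bound: "x \<bullet> (A *v x) \<le> l * (x \<bullet> x)" for x
  proof (cases "x = 0")
    case True then show ?thesis by simp
  next
    case False
    define u where "u = (1 / norm x) *\<^sub>R x"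
    have "norm u = 1" using False by (simp add: u_def)
    then have "u \<bullet> (A *v u) \<le> l" using zmax[of u] by (simp add: l_def)
    moreover have "u \<bullet> (A *v u) = (x \<bullet> (A *v x)) / (norm x)^2"
      by (simp add: u_def matrix_vector_mult_scaleR power2_eq_square)
    moreover have "(norm x)^2 > 0" using False by simp
    ultimately have "x \<bullet> (A *v x) \<le> l * (norm x)^2" by (simp add: divide_le_eq)
    then show ?thesis by (simp add: dot_square_norm)
  qed
  define y where "y = l *\<^sub>R z - A *v z"
  have "0 \<le> (2 * (y \<bullet> y)) * t + (l * (y \<bullet> y) - y \<bullet> (A *v y)) * t^2 + 0 * t^3 + 0 * t^4" for t
  proof -
    have "(z + t *\<^sub>R y) \<bullet> (A *v (z + t *\<^sub>R y)) \<le> l * ((z + t *\<^sub>R y) \<bullet> (z + t *\<^sub>R y))" by (rule bound)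
    moreover have "(z + t *\<^sub>R y) \<bullet> (z + t *\<^sub>R y) = 1 + 2*t*(z \<bullet> y) + t^2*(y \<bullet> y)"
      using zz by (simp add: inner_add_left inner_add_right inner_commute algebra_simps power2_eq_square)
    moreover have "y \<bullet> y = l * (z \<bullet> y) - y \<bullet> (A *v z)"
    proof -
      have "y \<bullet> y = y \<bullet> (l *\<^sub>R z - A *v z)" by (simp add: y_def)
      also have "\<dots> = l * (z \<bullet> y) - y \<bullet> (A *v z)" by (simp add: inner_diff_right inner_commute)
      finally show ?thesis .
    qed
    moreover have "(z + t *\<^sub>R y) \<bullet> (A *v (z + t *\<^sub>R y)) = l + 2*t*(y \<bullet> (A *v z)) + t^2 * (y \<bullet> (A *v y))"
      using quad_expand[OF sym, of z t y] by (simp add: l_def)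
    ultimately have i: "l + 2*t*(y \<bullet> (A *v z)) + t^2 * (y \<bullet> (A *v y)) \<le> l * (1 + 2*t*(z \<bullet> y) + t^2*(y \<bullet> y))"
      and e: "y \<bullet> y = l * (z \<bullet> y) - y \<bullet> (A *v z)" by simp_all
    have i2: "l + 2*t*(y \<bullet> (A *v z)) + t^2 * (y \<bullet> (A *v y)) \<le> l * (1 + 2*t*(z \<bullet> y) + t^2*(l * (z \<bullet> y) - y \<bullet> (A *v z)))"
      using i unfolding e .
    show ?thesis by (rule aux[OF i2 e])
  qed
  then have "eventually (\<lambda>t. 0 \<le> (2 * (y \<bullet> y)) * t + (l * (y \<bullet> y) - y \<bullet> (A *v y)) * t^2 + 0 * t^3 + 0 * t^4) (at 0)"
    by (intro always_eventually allI)
  then have "2 * (y \<bullet> y) = 0" by (rule poly_local[THEN conjunct1])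
  then have "y = 0" by simp
  then have "A *v z = l *\<^sub>R z" by (simp add: y_def)
  then show ?thesis using nz zmax by (auto simp: l_def)
qed



lemma eig_finite:
  fixes A :: "real^'n^'n"
  assumes sym: "transpose A = A"
  shows "finite {l. mat_eigenvalue A l}"
proof -
  define E where "E = {l. mat_eigenvalue A l}"
  define v where "v l = (SOME v. v \<noteq> 0 \<and> A *v v = l *\<^sub>R v)" for l
  have v: "v l \<noteq> 0 \<and> A *v v l = l *\<^sub>R v l" if "l \<in> E" for l
  proof -
    have "\<exists>v. v \<noteq> 0 \<and> A *v v = l *\<^sub>R v" using that by (simp add: E_def mat_eigenvalue_def)
    then show ?thesis unfolding v_def by (rule someI_ex)
  qed
  have inj: "inj_on v E"
  proof (rule inj_onI)
    fix a b assume ab: "a \<in> E" "b \<in> E" "v a = v b"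
    have 1: "A *v v a = a *\<^sub>R v a" using v[OF ab(1)] by simp
    have 2: "A *v v a = b *\<^sub>R v a" using v[OF ab(2)] ab(3) by simp
    from 1 2 have "a *\<^sub>R v a = b *\<^sub>R v a" by (rule subst)
    then show "a = b" using v[OF ab(1)] by (auto simp: scaleR_cancel_right)
  qed
  have orth: "pairwise orthogonal (v ` E)"
  proof (clarsimp simp: pairwise_def)
    fix a b assume ab: "a \<in> E" "b \<in> E" "v a \<noteq> v b"
    then have "a \<noteq> b" by auto
    have "a * (v b \<bullet> v a) = v b \<bullet> (A *v v a)" using v[OF ab(1)] by simp
    also have "\<dots> = v a \<bullet> (A *v v b)" by (rule sym_inner[OF sym])
    also have "\<dots> = b * (v a \<bullet> v b)" using v[OF ab(2)] by simp
    finally have "(a - b) * (v a \<bullet> v b) = 0" by (simp add: inner_commute algebra_simps)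
    with \<open>a \<noteq> b\<close> show "orthogonal (v a) (v b)" by (simp add: orthogonal_def)
  qed
  have "0 \<notin> v ` E" using v by force
  then have "finite (v ` E)" using orth pairwise_orthogonal_independent finiteI_independent by blast
  then show ?thesis using finite_imageD[OF _ inj] unfolding E_def by blast
qed

lemma eig_bounds:
  fixes A :: "real^'n^'n"
  assumes sym: "transpose A = A" and x: "norm x = 1"
  shows "lambda_min A \<le> x \<bullet> (A *v x) \<and> x \<bullet> (A *v x) \<le> lambda_max A"
proof
  have fin: "finite {l. mat_eigenvalue A l}" by (rule eig_finite[OF sym])
  obtain z where z: "norm z = 1" "\<And>x. norm x = 1 \<Longrightarrow> x \<bullet> (A *v x) \<le> z \<bullet> (A *v z)"
    "A *v z = (z \<bullet> (A *v z)) *\<^sub>R z"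
    using rayleigh_max[OF sym] by blast
  have "mat_eigenvalue A (z \<bullet> (A *v z))" unfolding mat_eigenvalue_def using z by (intro exI[of _ z]) auto
  then have "z \<bullet> (A *v z) \<le> lambda_max A" unfolding lambda_max_def using fin by simp
  then show "x \<bullet> (A *v x) \<le> lambda_max A" using z(2)[OF x] by simp
  have symm: "transpose (-A) = -A" using sym by (simp add: vec_eq_iff transpose_def)
  have neg: "(-A) *v y = - (A *v y)" for y by (simp add: vec_eq_iff matrix_vector_mult_def sum_negf)
  obtain w where w: "norm w = 1" "\<And>x. norm x = 1 \<Longrightarrow> x \<bullet> ((-A) *v x) \<le> w \<bullet> ((-A) *v w)"
    "(-A) *v w = (w \<bullet> ((-A) *v w)) *\<^sub>R w"
    using rayleigh_max[OF symm] by blast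
  have "A *v w = (w \<bullet> (A *v w)) *\<^sub>R w" using w(3) unfolding neg by (simp add: vec_eq_iff)
  then have "mat_eigenvalue A (w \<bullet> (A *v w))" unfolding mat_eigenvalue_def using w by (intro exI[of _ w]) auto
  then have "lambda_min A \<le> w \<bullet> (A *v w)" unfolding lambda_min_def using fin by simp
  then show "lambda_min A \<le> x \<bullet> (A *v x)" using w(2)[OF x] unfolding neg by simp
qed


lemma poly_id: "1/2*(1+t^2*m)*(a0 + 2*t*a1 + t^2*a2) + \<beta>/2*(b0 + 4*t*b1 + 6*t^2*b2 + 4*t^3*b3 + t^4*b4) - (1+t^2*m)^2*(1/2*a0 + \<beta>/2*b0) = (a1 + 2*\<beta>*b1)*t + (1/2*a2 - 1/2*m*a0 + 3*\<beta>*b2 - m*\<beta>*b0)*t^2 + (m*a1 + 2*\<beta>*b3)*t^3 + (1/2*m*a2 + \<beta>/2*b4 - m^2*(1/2*a0 + \<beta>/2*b0))*t^4" 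
  for t m a0 a1 a2 b0 b1 b2 b3 b4 \<beta> :: real
  by (simp add: algebra_simps power2_eq_square power3_eq_cube power4_eq_xxxx)
lemma pow4_exp: "(a + t*b)^4 = a^4 + 4*t*(a^3*b) + 6*t^2*(a^2*b^2) + 4*t^3*(a*b^3) + t^4*b^4" for a b t :: real
  by (simp add: algebra_simps power2_eq_square power3_eq_cube power4_eq_xxxx)

lemma cancelD: "D > 0 \<Longrightarrow> D^2 * (1/2*(1/D)*Q + b/2*(1/D^2)*R) = 1/2*D*Q + b/2*R" for D Q b R :: real
  by (simp add: field_simps power2_eq_square)

lemma quartic_scale:
  "quartic_obj C \<beta> (s *\<^sub>R x) = 1/2 * s^2 * (x \<bullet> (C *v x)) + \<beta>/2 * s^4 * (\<Sum>k\<in>UNIV. (x $ k)^4)"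
  by (simp add: quartic_obj_def matrix_vector_mult_scaleR power_mult_distrib sum_distrib_left power2_eq_square algebra_simps)

lemma sum_pow4_exp:
  "(\<Sum>k\<in>UNIV. ((z + t *\<^sub>R v) $ k)^4) = (\<Sum>k\<in>UNIV. (z$k)^4) + 4*t*(\<Sum>k\<in>UNIV. (z$k)^3*(v$k))
     + 6*t^2*(\<Sum>k\<in>UNIV. (z$k)^2*(v$k)^2) + 4*t^3*(\<Sum>k\<in>UNIV. (z$k)*(v$k)^3) + t^4*(\<Sum>k\<in>UNIV. (v$k)^4)"
  for z v :: "real^'n"
  by (simp add: pow4_exp sum.distrib sum_distrib_left)

locale qsetup =
  fixes C :: "real^'n^'n" and \<beta> r :: real
  assumes symC: "transpose C = C"
    and bnd: "\<And>x y. \<bar>x \<bullet> (C *v y)\<bar> \<le> r * norm x * norm y"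
    and r0: "0 \<le> r" and b0: "0 < \<beta>"
begin

abbreviation g where "g \<equiv> quartic_obj C \<beta>"
abbreviation M where "M \<equiv> local_minimizers_on g (sphere 0 1)"

lemma second_order:
  assumes z: "z \<in> M" and vz: "z \<bullet> v = 0"
  shows "v \<bullet> (C *v z) + 2*\<beta>*(\<Sum>k\<in>UNIV. (z$k)^3*(v$k)) = 0 \<and>
    0 \<le> 1/2*(v \<bullet> (C *v v)) - 1/2*(v \<bullet> v)*(z \<bullet> (C *v z)) + 3*\<beta>*(\<Sum>k\<in>UNIV. (z$k)^2*(v$k)^2) - (v \<bullet> v)*\<beta>*(\<Sum>k\<in>UNIV. (z$k)^4)"
proof -
  from z obtain e where e: "e > 0" and nz: "norm z = 1"
    and emin: "\<And>w. w \<in> sphere 0 1 \<Longrightarrow> dist w z < e \<Longrightarrow> g z \<le> g w"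
    unfolding local_minimizers_on_def by auto
  have zz: "z \<bullet> z = 1" using nz by (simp add: dot_square_norm)
  define m where "m = v \<bullet> v"
  have m0: "0 \<le> m" by (simp add: m_def)
  define w where "w t = (1 / sqrt (1 + t^2*m)) *\<^sub>R (z + t *\<^sub>R v)" for t
  have Dpos: "0 < 1 + t^2*m" for t using m0 by (simp add: add_pos_nonneg)
  have nrm: "(z + t *\<^sub>R v) \<bullet> (z + t *\<^sub>R v) = 1 + t^2*m" for t
    using zz vz by (simp add: m_def inner_add_left inner_add_right inner_commute power2_eq_square algebra_simps)
  have wS: "w t \<in> sphere 0 1" for t
  proof -
    have "norm (z + t *\<^sub>R v) = sqrt (1 + t^2*m)" using nrm[of t] by (simp add: norm_eq_sqrt_inner)
    then show ?thesis using Dpos[of t] by (simp add: w_def)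
  qed
  have "((\<lambda>t. (1 / sqrt (1 + t^2*m)) *\<^sub>R (z + t *\<^sub>R v)) \<longlongrightarrow> (1 / sqrt (1 + 0^2*m)) *\<^sub>R (z + 0 *\<^sub>R v)) (at 0)"
    by (intro tendsto_intros) auto
  moreover have "w = (\<lambda>t. (1 / sqrt (1 + t^2*m)) *\<^sub>R (z + t *\<^sub>R v))" by (rule ext) (simp add: w_def)
  ultimately have wlim: "(w \<longlongrightarrow> z) (at 0)" by simp
  have "eventually (\<lambda>t. dist (w t) z < e) (at 0)" using tendstoD[OF wlim e] .
  then have ev: "eventually (\<lambda>t. g z \<le> g (w t)) (at 0)"
    by (rule eventually_mono) (use emin wS in auto)
  define a0 where "a0 = z \<bullet> (C *v z)"
  define a1 where "a1 = v \<bullet> (C *v z)"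
  define a2 where "a2 = v \<bullet> (C *v v)"
  define b0 where "b0 = (\<Sum>k\<in>UNIV. (z$k)^4)"
  define b1 where "b1 = (\<Sum>k\<in>UNIV. (z$k)^3*(v$k))"
  define b2 where "b2 = (\<Sum>k\<in>UNIV. (z$k)^2*(v$k)^2)"
  define b3 where "b3 = (\<Sum>k\<in>UNIV. (z$k)*(v$k)^3)"
  define b4 where "b4 = (\<Sum>k\<in>UNIV. (v$k)^4)"
  have gz: "g z = 1/2*a0 + \<beta>/2*b0" by (simp add: quartic_obj_def a0_def b0_def)
  have gw: "(1 + t^2*m)^2 * g (w t) = 1/2*(1+t^2*m)*(a0 + 2*t*a1 + t^2*a2) + \<beta>/2*(b0 + 4*t*b1 + 6*t^2*b2 + 4*t^3*b3 + t^4*b4)" for t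
  proof -
    define D where "D = 1 + t^2*m"
    have D0: "D > 0" using Dpos by (simp add: D_def)
    have s2: "(1 / sqrt D)^2 = 1 / D" using D0 by (simp add: power_divide)
    have s4: "(1 / sqrt D)^4 = 1 / D^2"
    proof -
      have "sqrt D ^ 4 = sqrt D^2 * sqrt D^2" by (simp only: power4_eq_xxxx power2_eq_square mult.assoc)
      also have "\<dots> = D^2" using D0 by (simp add: power2_eq_square)
      finally show ?thesis by (simp add: power_divide)
    qed
    have "g (w t) = 1/2 * (1/D) * (a0 + 2*t*a1 + t^2*a2) + \<beta>/2 * (1/D^2) * (b0 + 4*t*b1 + 6*t^2*b2 + 4*t^3*b3 + t^4*b4)"
      unfolding w_def D_def[symmetric] quartic_scale s2 s4 quad_expand[OF symC] sum_pow4_exp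
      by (simp add: a0_def a1_def a2_def b0_def b1_def b2_def b3_def b4_def)
    then have "D^2 * g (w t) = 1/2 * D * (a0 + 2*t*a1 + t^2*a2) + \<beta>/2 * (b0 + 4*t*b1 + 6*t^2*b2 + 4*t^3*b3 + t^4*b4)"
      using cancelD[OF D0] by simp
    then show ?thesis by (simp add: D_def)
  qed
  have "eventually (\<lambda>t. 0 \<le> (a1 + 2*\<beta>*b1)*t + (1/2*a2 - 1/2*m*a0 + 3*\<beta>*b2 - m*\<beta>*b0)*t^2 + (m*a1 + 2*\<beta>*b3)*t^3 + (1/2*m*a2 + \<beta>/2*b4 - m^2*(1/2*a0 + \<beta>/2*b0))*t^4) (at 0)"
    using ev
  proof (rule eventually_mono)
    fix t assume le: "g z \<le> g (w t)"
    have "0 \<le> (1 + t^2*m)^2 * (g (w t) - g z)" using le by simp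
    also have "\<dots> = (1 + t^2*m)^2 * g (w t) - (1 + t^2*m)^2 * (1/2*a0 + \<beta>/2*b0)" by (simp add: gz algebra_simps)
    also have "\<dots> = (a1 + 2*\<beta>*b1)*t + (1/2*a2 - 1/2*m*a0 + 3*\<beta>*b2 - m*\<beta>*b0)*t^2 + (m*a1 + 2*\<beta>*b3)*t^3 + (1/2*m*a2 + \<beta>/2*b4 - m^2*(1/2*a0 + \<beta>/2*b0))*t^4"
      unfolding gw by (rule poly_id)
    finally show "0 \<le> (a1 + 2*\<beta>*b1)*t + (1/2*a2 - 1/2*m*a0 + 3*\<beta>*b2 - m*\<beta>*b0)*t^2 + (m*a1 + 2*\<beta>*b3)*t^3 + (1/2*m*a2 + \<beta>/2*b4 - m^2*(1/2*a0 + \<beta>/2*b0))*t^4" .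
  qed
  from poly_local[OF this] show ?thesis
    by (simp add: a0_def a1_def a2_def b0_def b1_def b2_def m_def)
qed

end


lemma card_cs:
  fixes a :: "'a \<Rightarrow> real"
  assumes "finite U"
  shows "(\<Sum>i\<in>U. a i)^2 \<le> real (card U) * (\<Sum>i\<in>U. (a i)^2)"
  using Cauchy_Schwarz_ineq_sum[of a "\<lambda>_. 1" U] by (simp add: mult.commute)

lemma sumsq_norm:
  fixes z :: "real^'n"
  shows "(\<Sum>k\<in>UNIV. (z$k)^2) = (norm z)^2"
proof -
  have "(norm z)^2 = z \<bullet> z" by (simp add: power2_norm_eq_inner)
  then show ?thesis by (simp add: inner_vec_def power2_eq_square)
qed

context qsetup begin

lemma Cnorm: "norm (C *v z) \<le> r * norm z" for z :: "real^'n"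
proof (cases "C *v z = 0")
  case True then show ?thesis using r0 by simp
next
  case False
  have "(norm (C *v z))^2 = \<bar>(C *v z) \<bullet> (C *v z)\<bar>" by (simp add: power2_norm_eq_inner)
  also have "\<dots> \<le> r * norm (C *v z) * norm z" by (rule bnd)
  finally have "norm (C *v z) * norm (C *v z) \<le> norm (C *v z) * (r * norm z)"
    by (simp add: power2_eq_square algebra_simps)
  then show ?thesis using False by simp
qed

lemma Ccomp: "\<bar>(C *v z) $ k\<bar> \<le> r * norm z" for z :: "real^'n"
  using component_le_norm_cart[of "C *v z" k] Cnorm[of z] by linarith

lemma qbnd: "\<bar>z \<bullet> (C *v z)\<bar> \<le> r * (norm z)^2" for z :: "real^'n"
  using bnd[of z z] by (simp add: power2_eq_square mult.assoc)

lemma sumsq1: "norm z = 1 \<Longrightarrow> (\<Sum>k\<in>UNIV. (z$k)^2) = 1" for z :: "real^'n"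
  by (simp add: sumsq_norm)

lemma coord_sq_le1: "norm z = 1 \<Longrightarrow> (z$k)^2 \<le> 1" for z :: "real^'n"
proof -
  assume "norm z = 1"
  have "(z$k)^2 \<le> (norm z)^2" using component_le_norm_cart[of z k]
    using power_mono[OF component_le_norm_cart[of z k] abs_ge_zero, of 2] by simp
  then show ?thesis using \<open>norm z = 1\<close> by simp
qed

lemma P_le1: "norm z = 1 \<Longrightarrow> (\<Sum>k\<in>UNIV. (z$k)^4) \<le> 1" for z :: "real^'n"
proof -
  assume n: "norm z = 1"
  have "(\<Sum>k\<in>UNIV. (z$k)^4) \<le> (\<Sum>k\<in>UNIV. (z$k)^2)"
  proof (rule sum_mono)
    fix k
    have "(z$k)^4 = (z$k)^2 * (z$k)^2" by (simp add: power4_eq_xxxx power2_eq_square)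
    also have "\<dots> \<le> 1 * (z$k)^2" using coord_sq_le1[OF n, of k] by (intro mult_right_mono) auto
    finally show "(z$k)^4 \<le> (z$k)^2" by simp
  qed
  then show ?thesis using sumsq1[OF n] by simp
qed

lemma P_ge: "norm z = 1 \<Longrightarrow> 1 \<le> real CARD('n) * (\<Sum>k\<in>UNIV. (z$k)^4)" for z :: "real^'n"
proof -
  assume n: "norm z = 1"
  have "(\<Sum>k\<in>UNIV. (z$k)^2)^2 \<le> real (card (UNIV::'n set)) * (\<Sum>k\<in>UNIV. ((z$k)^2)^2)"
    by (rule card_cs) simp
  then show ?thesis using sumsq1[OF n] by (simp flip: power_mult)
qed

lemma P_ge0: "norm z = 1 \<Longrightarrow> z$k = 0 \<Longrightarrow> 1 \<le> (real CARD('n) - 1) * (\<Sum>k\<in>UNIV. (z$k)^4)" for z :: "real^'n"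
proof -
  assume n: "norm z = 1" and zk: "z$k = 0"
  let ?U = "UNIV - {k}"
  have "(\<Sum>j\<in>UNIV. (z$j)^2) = (z$k)^2 + (\<Sum>j\<in>?U. (z$j)^2)"
    by (simp add: sum.remove[of UNIV k])
  then have s1: "(\<Sum>j\<in>?U. (z$j)^2) = 1" using sumsq1[OF n] zk by simp
  have "(\<Sum>j\<in>UNIV. (z$j)^4) = (z$k)^4 + (\<Sum>j\<in>?U. (z$j)^4)"
    by (simp add: sum.remove[of UNIV k])
  then have s2: "(\<Sum>j\<in>UNIV. (z$j)^4) = (\<Sum>j\<in>?U. (z$j)^4)" using zk by simp
  have "(\<Sum>j\<in>?U. (z$j)^2)^2 \<le> real (card ?U) * (\<Sum>j\<in>?U. ((z$j)^2)^2)"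
    by (rule card_cs) simp
  moreover have "real (card ?U) = real CARD('n) - 1"
    by (simp add: card_Diff_singleton of_nat_diff)
  ultimately show ?thesis using s1 s2 by (simp flip: power_mult)
qed

lemma nonzero_coord:
  assumes z: "z \<in> M" and rb: "(real CARD('n) - 1) * r < \<beta>"
  shows "z$k \<noteq> 0"
proof
  assume zk: "z$k = 0"
  have n: "norm z = 1" using z by (simp add: local_minimizers_on_def)
  define v where "v = axis k (1::real)"
  have vz: "z \<bullet> v = 0" using zk by (simp add: v_def inner_axis inner_commute)
  have vv: "v \<bullet> v = 1" by (simp add: v_def inner_axis_axis)
  have s0: "(\<Sum>j\<in>UNIV. (z$j)^2*(v$j)^2) = 0"
    by (rule sum.neutral) (auto simp: v_def axis_def zk)
  from second_order[OF z vz] have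
    "0 \<le> 1/2*(v \<bullet> (C *v v)) - 1/2*(z \<bullet> (C *v z)) - \<beta>*(\<Sum>k\<in>UNIV. (z$k)^4)"
    using vv s0 by simp
  moreover have "\<bar>v \<bullet> (C *v v)\<bar> \<le> r" using qbnd[of v] vv by (simp add: power2_norm_eq_inner)
  moreover have "\<bar>z \<bullet> (C *v z)\<bar> \<le> r" using qbnd[of z] n by simp
  ultimately have bp: "\<beta>*(\<Sum>k\<in>UNIV. (z$k)^4) \<le> r" by linarith
  have ge: "1 \<le> (real CARD('n) - 1) * (\<Sum>k\<in>UNIV. (z$k)^4)" by (rule P_ge0[OF n zk])
  have N1: "0 \<le> real CARD('n) - 1" by simp
  have "\<beta> \<le> \<beta> * ((real CARD('n) - 1) * (\<Sum>k\<in>UNIV. (z$k)^4))" using ge b0 by simp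
  also have "\<dots> = (real CARD('n) - 1) * (\<beta>*(\<Sum>k\<in>UNIV. (z$k)^4))" by simp
  also have "\<dots> \<le> (real CARD('n) - 1) * r" using bp N1 by (rule mult_left_mono)
  finally show False using rb by simp
qed

end


context qsetup begin

lemma coord_lower:
  assumes z: "z \<in> M" and rb: "2 * r * real CARD('n) \<le> \<beta>"
  shows "1 \<le> (12 * real CARD('n) + 1) * (z$k)^2"
proof -
  have n: "norm z = 1" using z by (simp add: local_minimizers_on_def)
  have zz: "z \<bullet> z = 1" using n by (simp add: dot_square_norm)
  define v where "v = axis k (1::real) - (z$k) *\<^sub>R z"
  define x where "x = (z$k)^2"
  define P where "P = (\<Sum>k\<in>UNIV. (z$k)^4)"
  define m where "m = v \<bullet> v"
  have vz: "z \<bullet> v = 0" using zz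
    by (simp add: v_def inner_diff_right inner_axis inner_commute)
  have mx: "m = 1 - x"
    using zz by (simp add: m_def v_def x_def inner_diff_left inner_diff_right inner_axis inner_axis_axis
        inner_commute power2_eq_square algebra_simps)
  have vj: "v$j = (if j = k then 1 else 0) - z$k * z$j" for j
    by (simp add: v_def axis_def)
  have s2: "(\<Sum>j\<in>UNIV. (z$j)^2*(v$j)^2) = x - 2*x^2 + x*P"
  proof -
    have "(z$j)^2*(v$j)^2 = (if j = k then (z$k)^2 - 2*(z$k)^4 else 0) + (z$k)^2 * (z$j)^4" for j
      unfolding vj by (auto simp: power2_eq_square power4_eq_xxxx algebra_simps)
    then have "(\<Sum>j\<in>UNIV. (z$j)^2*(v$j)^2) = (\<Sum>j\<in>UNIV. (if j = k then (z$k)^2 - 2*(z$k)^4 else 0) + (z$k)^2 * (z$j)^4)"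
      by simp
    also have "\<dots> = (z$k)^2 - 2*(z$k)^4 + (z$k)^2 * P"
      by (simp add: sum.distrib sum_distrib_left P_def)
    finally show ?thesis by (simp add: x_def power2_eq_square power4_eq_xxxx)
  qed
  from second_order[OF z vz] have so:
    "0 \<le> 1/2*(v \<bullet> (C *v v)) - 1/2*m*(z \<bullet> (C *v z)) + 3*\<beta>*(x - 2*x^2 + x*P) - m*\<beta>*P"
    using s2 by (simp add: m_def P_def)
  have x0: "0 \<le> x" by (simp add: x_def)
  have x1: "x \<le> 1" using coord_sq_le1[OF n] by (simp add: x_def)
  have m0: "0 \<le> m" using mx x1 by simp
  have P1: "P \<le> 1" using P_le1[OF n] by (simp add: P_def)
  have PN: "1 \<le> real CARD('n) * P" using P_ge[OF n] by (simp add: P_def)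
  have q1: "v \<bullet> (C *v v) \<le> r * m" using qbnd[of v] by (simp add: m_def power2_norm_eq_inner)
  have q2: "- (m * (z \<bullet> (C *v z))) \<le> m * r"
  proof -
    have "\<bar>z \<bullet> (C *v z)\<bar> \<le> r" using qbnd[of z] n by simp
    then have "- (z \<bullet> (C *v z)) \<le> r" by linarith
    then have "m * (- (z \<bullet> (C *v z))) \<le> m * r" using m0 by (rule mult_left_mono)
    then show ?thesis by simp
  qed
  have t3: "3*\<beta>*(x - 2*x^2 + x*P) \<le> 6*\<beta>*x"
  proof -
    have "x*P \<le> x*1" using P1 x0 by (rule mult_left_mono)
    moreover have "0 \<le> x^2" by simp
    ultimately have "x - 2*x^2 + x*P \<le> 2*x" by linarith
    then show ?thesis using b0 by simp
  qed
  have t4: "m*\<beta>/real CARD('n) \<le> m*\<beta>*P"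
  proof -
    have "1/real CARD('n) \<le> P" using PN by (simp add: field_simps)
    then have "m*\<beta>*(1/real CARD('n)) \<le> m*\<beta>*P" by (rule mult_left_mono) (use m0 b0 in simp)
    then show ?thesis by simp
  qed
  have main: "m*\<beta>/real CARD('n) \<le> r*m + 6*\<beta>*x" using so q1 q2 t3 t4 by (simp add: algebra_simps)
  have rN: "r \<le> \<beta> / (2 * real CARD('n))" using rb by (simp add: field_simps)
  have "m * (\<beta> / (2 * real CARD('n))) \<le> m * (\<beta> / real CARD('n) - r)"
    using rN m0 by (intro mult_left_mono) (auto simp: field_simps)
  also have "\<dots> \<le> 6*\<beta>*x" using main by (simp add: algebra_simps)
  finally have "m * \<beta> \<le> 12 * real CARD('n) * \<beta> * x" by (simp add: field_simps)
  then have "m \<le> 12 * real CARD('n) * x" using b0 by (simp add: mult.commute mult.left_commute)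
  then show ?thesis using mx by (simp add: x_def algebra_simps)
qed

end


context qsetup begin

definition mu :: "real^'n \<Rightarrow> real" where
  "mu z = z \<bullet> (C *v z) + 2*\<beta>*(\<Sum>j\<in>UNIV. (z$j)^4)"

lemma first_order:
  assumes z: "z \<in> M"
  shows "(C *v z)$k + 2*\<beta>*(z$k)^3 = mu z * z$k"
proof -
  have n: "norm z = 1" using z by (simp add: local_minimizers_on_def)
  have zz: "z \<bullet> z = 1" using n by (simp add: dot_square_norm)
  define G where "G = C *v z + (2*\<beta>) *\<^sub>R (\<chi> j. (z$j)^3)"
  have orth: "v \<bullet> G = 0" if "z \<bullet> v = 0" for v
  proof -
    have "v \<bullet> (C *v z) + 2*\<beta>*(\<Sum>k\<in>UNIV. (z$k)^3*(v$k)) = 0" using second_order[OF z that] by simp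
    moreover have "v \<bullet> (\<chi> j. (z$j)^3) = (\<Sum>k\<in>UNIV. (z$k)^3*(v$k))" by (simp add: inner_vec_def mult.commute)
    ultimately show ?thesis by (simp add: G_def inner_add_right)
  qed
  define w where "w = G - (z \<bullet> G) *\<^sub>R z"
  have "z \<bullet> w = 0" using zz by (simp add: w_def inner_diff_right)
  then have wG: "w \<bullet> G = 0" by (rule orth)
  have "w \<bullet> w = w \<bullet> G - (z \<bullet> G) * (w \<bullet> z)" by (simp add: w_def inner_diff_right inner_diff_left inner_commute zz)
  also have "\<dots> = 0" using wG \<open>z \<bullet> w = 0\<close> by (simp add: inner_commute)
  finally have "w = 0" by simp
  then have GG: "G = (z \<bullet> G) *\<^sub>R z" by (simp add: w_def)
  have "z \<bullet> G = mu z"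
  proof -
    have "z \<bullet> (\<chi> j. (z$j)^3) = (\<Sum>j\<in>UNIV. (z$j)^4)"
      by (simp add: inner_vec_def power3_eq_cube power4_eq_xxxx mult.assoc)
    then show ?thesis by (simp add: G_def mu_def inner_add_right)
  qed
  have "G $ k = ((z \<bullet> G) *\<^sub>R z) $ k" by (rule arg_cong[where f="\<lambda>v. v $ k", OF GG])
  with \<open>z \<bullet> G = mu z\<close> have "G $ k = mu z * z$k" by simp
  then show ?thesis by (simp add: G_def)
qed

lemma coord_near:
  assumes u: "u \<in> M" and rb1: "2 * r * real CARD('n) \<le> \<beta>"
  shows "mu u \<le> 2*\<beta>/real CARD('n) + r*(12*real CARD('n)+1)"
    and "1/real CARD('n) - r*(12*real CARD('n)+1)/\<beta> \<le> (u$k)^2"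
proof -
  define N where "N = real CARD('n)"
  define E where "E = r*(12*N+1)"
  have N0: "N > 0" by (simp add: N_def)
  have n: "norm u = 1" using u by (simp add: local_minimizers_on_def)
  have dev: "\<bar>mu u - 2*\<beta>*(u$j)^2\<bar> \<le> E" for j
  proof -
    have fo: "(C *v u)$j = u$j * (mu u - 2*\<beta>*(u$j)^2)"
      using first_order[OF u, of j] by (simp add: algebra_simps power2_eq_square power3_eq_cube)
    have cb: "\<bar>(C *v u)$j\<bar> \<le> r" using Ccomp[of u j] n by simp
    have low: "1 \<le> (12 * N + 1) * (u$j)^2" using coord_lower[OF u rb1, of j] by (simp add: N_def)
    have sq1: "(u$j)^2 \<le> 1" by (rule coord_sq_le1[OF n])
    have ab: "(u$j)^2 \<le> \<bar>u$j\<bar>"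
    proof -
      have "\<bar>u$j\<bar> \<le> 1" using sq1 by (simp add: abs_square_le_1)
      then have "\<bar>u$j\<bar> * \<bar>u$j\<bar> \<le> 1 * \<bar>u$j\<bar>" by (intro mult_right_mono) auto
      then show ?thesis by (simp add: power2_eq_square abs_mult_self_eq)
    qed
    have "(12 * N + 1) * (u$j)^2 \<le> (12 * N + 1) * \<bar>u$j\<bar>" using ab N0 by (intro mult_left_mono) auto
    then have low2: "1 \<le> (12 * N + 1) * \<bar>u$j\<bar>" using low by linarith
    have "\<bar>mu u - 2*\<beta>*(u$j)^2\<bar> * \<bar>u$j\<bar> \<le> r" using fo cb by (simp add: abs_mult mult.commute)
    then have "\<bar>mu u - 2*\<beta>*(u$j)^2\<bar> * \<bar>u$j\<bar> * (12 * N + 1) \<le> r * (12 * N + 1)"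
      using N0 by (intro mult_right_mono) auto
    moreover have "\<bar>mu u - 2*\<beta>*(u$j)^2\<bar> \<le> \<bar>mu u - 2*\<beta>*(u$j)^2\<bar> * \<bar>u$j\<bar> * (12 * N + 1)"
    proof -
      have "\<bar>mu u - 2*\<beta>*(u$j)^2\<bar> * 1 \<le> \<bar>mu u - 2*\<beta>*(u$j)^2\<bar> * ((12 * N + 1) * \<bar>u$j\<bar>)"
        using low2 by (intro mult_left_mono) auto
      then show ?thesis by (simp add: algebra_simps)
    qed
    ultimately show ?thesis by (simp add: E_def)
  qed
  have sumdev: "(\<Sum>j\<in>UNIV. mu u - 2*\<beta>*(u$j)^2) = N * mu u - 2*\<beta>"
    using sumsq1[OF n] by (simp add: sum_subtractf sum_distrib_left[symmetric] N_def)
  have "(\<Sum>j\<in>UNIV. mu u - 2*\<beta>*(u$j)^2) \<le> (\<Sum>j\<in>(UNIV::'n set). E)"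
  proof (rule sum_mono)
    fix j show "mu u - 2*\<beta>*(u$j)^2 \<le> E" using abs_le_D1[OF dev[of j]] by linarith
  qed
  then have up: "N * mu u - 2*\<beta> \<le> N * E" using sumdev by (simp add: N_def)
  have "(\<Sum>j\<in>(UNIV::'n set). - E) \<le> (\<Sum>j\<in>UNIV. mu u - 2*\<beta>*(u$j)^2)"
    proof (rule sum_mono)
    fix j show "- E \<le> mu u - 2*\<beta>*(u$j)^2" using abs_le_D2[OF dev[of j]] by linarith
  qed
  then have lo: "- (N * E) \<le> N * mu u - 2*\<beta>" using sumdev by (simp add: N_def)
  have "N * mu u \<le> N * (2*\<beta>/N + E)" using up N0 by (simp add: algebra_simps)
  then have mu_up: "mu u \<le> 2*\<beta>/N + E" using N0 by simp
  then show "mu u \<le> 2*\<beta>/real CARD('n) + r*(12*real CARD('n)+1)" by (simp add: N_def E_def)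
  have "N * (2*\<beta>/N - E) \<le> N * mu u" using lo N0 by (simp add: algebra_simps)
  then have mu_lo: "2*\<beta>/N - E \<le> mu u" using N0 by simp
  have "mu u - 2*\<beta>*(u$k)^2 \<le> E" using dev[of k] by simp
  then have "2*\<beta>/N - 2*E \<le> 2*\<beta>*(u$k)^2" using mu_lo by simp
  then have "\<beta>/N - E \<le> \<beta>*(u$k)^2" by simp
  moreover have "\<beta>*(1/N - E/\<beta>) = \<beta>/N - E" using b0 by (simp add: field_simps)
  ultimately have "\<beta>*(1/N - E/\<beta>) \<le> \<beta>*(u$k)^2" by simp
  then have "1/N - E/\<beta> \<le> (u$k)^2" using b0 by simp
  then show "1/real CARD('n) - r*(12*real CARD('n)+1)/\<beta> \<le> (u$k)^2" by (simp add: N_def E_def)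
qed

end


lemma cube_diff_id: "(a - b) * (a^3 - b^3) = (a - b)^2 * (a^2 + a*b + b^2)" for a b :: real
  by (simp add: algebra_simps power2_eq_square power3_eq_cube)

context qsetup begin

lemma energy_eq:
  assumes z: "z \<in> M"
  shows "d \<bullet> (C *v z) + 2*\<beta>*(\<Sum>k\<in>UNIV. d$k * (z$k)^3) = mu z * (d \<bullet> z)"
proof -
  have "(\<Sum>k\<in>UNIV. d$k * ((C *v z)$k + 2*\<beta>*(z$k)^3)) = (\<Sum>k\<in>UNIV. d$k * (mu z * z$k))"
    using first_order[OF z] by simp
  moreover have "(\<Sum>k\<in>UNIV. d$k * ((C *v z)$k + 2*\<beta>*(z$k)^3)) = d \<bullet> (C *v z) + 2*\<beta>*(\<Sum>k\<in>UNIV. d$k * (z$k)^3)"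
    by (simp add: inner_vec_def distrib_left sum.distrib sum_distrib_left mult.left_commute)
  moreover have "(\<Sum>k\<in>UNIV. d$k * (mu z * z$k)) = mu z * (d \<bullet> z)"
    by (simp add: inner_vec_def sum_distrib_left mult.left_commute)
  ultimately show ?thesis by simp
qed

lemma unique:
  assumes z: "z \<in> M" and y: "y \<in> M" and sg: "\<And>k. 0 < z$k \<longleftrightarrow> 0 < y$k"
    and rb1: "2 * r * real CARD('n) \<le> \<beta>" and rb2: "(real CARD('n) - 1) * r < \<beta>"
    and rb3: "r * (real CARD('n) * (21 * real CARD('n) + 2)) < \<beta>"
  shows "z = y"
proof -
  define N where "N = real CARD('n)"
  define E where "E = r*(12*N+1)"
  define L where "L = 1/N - E/\<beta>"
  have N0: "N > 0" by (simp add: N_def)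
  have nz: "norm z = 1" using z by (simp add: local_minimizers_on_def)
  have ny: "norm y = 1" using y by (simp add: local_minimizers_on_def)
  have zz: "z \<bullet> z = 1" using nz by (simp add: dot_square_norm)
  have yy: "y \<bullet> y = 1" using ny by (simp add: dot_square_norm)
  have Lz: "L \<le> (z$k)^2" for k using coord_near(2)[OF z rb1, of k] by (simp add: L_def E_def N_def)
  have Ly: "L \<le> (y$k)^2" for k using coord_near(2)[OF y rb1, of k] by (simp add: L_def E_def N_def)
  have muz: "mu z \<le> 2*\<beta>/N + E" using coord_near(1)[OF z rb1] by (simp add: E_def N_def)
  have muy: "mu y \<le> 2*\<beta>/N + E" using coord_near(1)[OF y rb1] by (simp add: E_def N_def)
  have prod: "L \<le> z$k * y$k" for k
  proof -
    have z0: "z$k \<noteq> 0" by (rule nonzero_coord[OF z rb2])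
    have y0: "y$k \<noteq> 0" by (rule nonzero_coord[OF y rb2])
    have pos: "0 < z$k * y$k"
    proof (cases "0 < z$k")
      case True then show ?thesis using sg[of k] by simp
    next
      case False
      then have "z$k < 0" using z0 by simp
      moreover have "y$k < 0" using False sg[of k] y0 by simp
      ultimately show ?thesis by (simp add: mult_neg_neg)
    qed
    show ?thesis
    proof (cases "L \<le> 0")
      case True then show ?thesis using pos by simp
    next
      case False
      then have "L * L \<le> (z$k)^2 * (y$k)^2" using Lz[of k] Ly[of k] by (intro mult_mono) auto
      then have "L^2 \<le> (z$k * y$k)^2" by (simp add: power2_eq_square algebra_simps)
      then show ?thesis by (rule power2_le_imp_le[OF _ less_imp_le[OF pos]])
    qed
  qed
  define d where "d = z - y"
  have tm: "3*L*(d$k)^2 \<le> d$k * ((z$k)^3 - (y$k)^3)" for k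
  proof -
    have "3*L \<le> (z$k)^2 + z$k*y$k + (y$k)^2" using Lz[of k] Ly[of k] prod[of k] by simp
    then have "(d$k)^2 * (3*L) \<le> (d$k)^2 * ((z$k)^2 + z$k*y$k + (y$k)^2)" by (intro mult_left_mono) auto
    then show ?thesis by (simp add: d_def cube_diff_id mult.commute)
  qed
  have dd: "d \<bullet> d = 2 - 2*(z \<bullet> y)" using zz yy by (simp add: d_def inner_diff_left inner_diff_right inner_commute)
  have sum_term: "3*L*(d \<bullet> d) \<le> (\<Sum>k\<in>UNIV. d$k * ((z$k)^3 - (y$k)^3))"
  proof -
    have "3*L*(d \<bullet> d) = (\<Sum>k\<in>UNIV. 3*L*(d$k)^2)" by (simp add: inner_vec_def sum_distrib_left power2_eq_square)
    also have "\<dots> \<le> (\<Sum>k\<in>UNIV. d$k * ((z$k)^3 - (y$k)^3))" by (rule sum_mono) (rule tm)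
    finally show ?thesis .
  qed
  have ez: "d \<bullet> (C *v z) + 2*\<beta>*(\<Sum>k\<in>UNIV. d$k * (z$k)^3) = mu z * (d \<bullet> z)" by (rule energy_eq[OF z])
  have ey: "d \<bullet> (C *v y) + 2*\<beta>*(\<Sum>k\<in>UNIV. d$k * (y$k)^3) = mu y * (d \<bullet> y)" by (rule energy_eq[OF y])
  have dz: "d \<bullet> z = 1 - z \<bullet> y" using zz inner_commute[of y z] by (simp add: d_def inner_diff_left)
  have dy: "d \<bullet> y = z \<bullet> y - 1" using yy by (simp add: d_def inner_diff_left)
  have Cd: "d \<bullet> (C *v d) = d \<bullet> (C *v z) - d \<bullet> (C *v y)"
    by (simp add: d_def matrix_vector_mult_diff_distrib inner_diff_right)
  have sdiff: "(\<Sum>k\<in>UNIV. d$k * ((z$k)^3 - (y$k)^3)) = (\<Sum>k\<in>UNIV. d$k * (z$k)^3) - (\<Sum>k\<in>UNIV. d$k * (y$k)^3)"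
    by (simp add: right_diff_distrib sum_subtractf)
  have key: "d \<bullet> (C *v d) + 2*\<beta>*(\<Sum>k\<in>UNIV. d$k * ((z$k)^3 - (y$k)^3)) = (mu z + mu y) * ((d \<bullet> d)/2)"
    unfolding Cd sdiff dd using ez ey dz dy by (simp add: algebra_simps)
  have q: "- r * (d \<bullet> d) \<le> d \<bullet> (C *v d)" using qbnd[of d] by (simp add: power2_norm_eq_inner abs_le_iff)
  have dd0: "0 \<le> d \<bullet> d" by simp
  have "2*\<beta>*(3*L*(d \<bullet> d)) \<le> 2*\<beta>*(\<Sum>k\<in>UNIV. d$k * ((z$k)^3 - (y$k)^3))"
    using sum_term b0 by simp
  moreover have "6*\<beta>*L*(d \<bullet> d) = 2*\<beta>*(3*L*(d \<bullet> d))" by simp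
  ultimately have A: "- r * (d \<bullet> d) + 6*\<beta>*L*(d \<bullet> d) \<le> (mu z + mu y) * ((d \<bullet> d)/2)"
    using key q by linarith
  have B: "(mu z + mu y) * ((d \<bullet> d)/2) \<le> (2*\<beta>/N + E) * (d \<bullet> d)"
  proof -
    have "(mu z + mu y) * ((d \<bullet> d)/2) \<le> (2*(2*\<beta>/N + E)) * ((d \<bullet> d)/2)"
      using muz muy dd0 by (intro mult_right_mono) auto
    moreover have "(2*(2*\<beta>/N + E)) * ((d \<bullet> d)/2) = (2*\<beta>/N + E) * (d \<bullet> d)" by simp
    ultimately show ?thesis by (rule ord_le_eq_trans)
  qed
  define K where "K = 6*\<beta>*L - r - 2*\<beta>/N - E"
  have KA: "K * (d \<bullet> d) \<le> 0" using A B by (simp add: K_def algebra_simps)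
  have K_eq: "K = 4*\<beta>/N - 7*E - r" using b0 by (simp add: K_def L_def field_simps)
  have "N * (7*E + r) = 4 * (r * (N * (21 * N + 2)))" by (simp add: E_def algebra_simps)
  also have "\<dots> < 4 * \<beta>" using rb3 by (simp add: N_def)
  finally have "7*E + r < 4*\<beta>/N" using N0 by (simp add: field_simps mult.commute)
  then have "K > 0" using K_eq by simp
  then have "d \<bullet> d \<le> 0" using KA by (simp add: mult_le_0_iff)
  then have "d \<bullet> d = 0" using dd0 by linarith
  then have "d = 0" by simp
  then show ?thesis by (simp add: d_def)
qed

end


context qsetup begin

lemma g_cont: "continuous_on S g"
  unfolding quartic_obj_def by (intro continuous_intros)

lemma exists_min:
  assumes rb: "2 * r * (real CARD('n) * (real CARD('n) - 1)) < \<beta>"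
  shows "\<exists>z\<in>M. {k. 0 < z$k} = T"
proof -
  define N where "N = real CARD('n)"
  have N0: "N > 0" by (simp add: N_def)
  define s where "s k = (if k \<in> T then 1 else -1::real)" for k
  have s2: "(s k)^2 = 1" for k by (simp add: s_def)
  define K where "K = sphere (0::real^'n) 1 \<inter> {z. \<forall>k. 0 \<le> s k * z$k}"
  have cl: "closed {z::real^'n. \<forall>k. 0 \<le> s k * z$k}"
    by (intro closed_Collect_all closed_Collect_le continuous_intros)
  have cK: "compact K" unfolding K_def by (rule compact_Int_closed[OF compact_sphere cl])
  define u where "u = (\<chi> k. s k / sqrt N)"
  have u2: "(u$k)^2 = 1/N" for k using N0 by (simp add: u_def power_divide s2)
  have u4: "(u$k)^4 = 1/N^2" for k
  proof -
    have "(u$k)^4 = ((u$k)^2)^2" by (simp flip: power_mult)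
    then show ?thesis using u2 by (simp add: power_divide)
  qed
  have nu: "norm u = 1"
  proof -
    have "(norm u)^2 = 1" using N0 by (simp add: sumsq_norm[symmetric] u2 N_def)
    then show ?thesis using norm_ge_zero[of u] by (auto simp: power2_eq_1_iff)
  qed
  have uK: "u \<in> K" using nu N0 by (auto simp: K_def u_def s_def)
  have gu: "g u \<le> r/2 + \<beta>/(2*N)"
  proof -
    have "\<bar>u \<bullet> (C *v u)\<bar> \<le> r" using qbnd[of u] nu by simp
    moreover have "(\<Sum>k\<in>UNIV. (u$k)^4) = 1/N" using N0 by (simp add: u4 N_def power2_eq_square)
    ultimately show ?thesis by (simp add: quartic_obj_def)
  qed
  obtain z where zK: "z \<in> K" and zmin: "\<And>w. w \<in> K \<Longrightarrow> g z \<le> g w"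
    using continuous_attains_inf[OF cK _ g_cont] uK by blast
  have nz: "norm z = 1" using zK by (simp add: K_def)
  have nzero: "z$k \<noteq> 0" for k
  proof
    assume zk: "z$k = 0"
    define P where "P = (\<Sum>k\<in>UNIV. (z$k)^4)"
    have PN1: "1 \<le> (N - 1) * P" using P_ge0[OF nz zk] by (simp add: N_def P_def)
    have P1: "P \<le> 1" using P_le1[OF nz] by (simp add: P_def)
    have "\<bar>z \<bullet> (C *v z)\<bar> \<le> r" using qbnd[of z] nz by simp
    then have gz: "- r/2 + \<beta>/2 * P \<le> g z" by (simp add: quartic_obj_def P_def)
    have "g z \<le> g u" using zmin uK by simp
    with gz gu have "\<beta>/2 * P - \<beta>/(2*N) \<le> r" by simp
    then have "\<beta> * (P - 1/N) \<le> 2 * r" by (simp add: algebra_simps)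
    then have c1: "\<beta> * (N * (N - 1) * (P - 1/N)) \<le> 2 * r * (N * (N - 1))"
    proof -
      assume h: "\<beta> * (P - 1/N) \<le> 2 * r"
      have "1 \<le> N" by (simp add: N_def)
      then have "0 \<le> N * (N - 1)" by simp
      with h have "(\<beta> * (P - 1/N)) * (N * (N - 1)) \<le> 2 * r * (N * (N - 1))" by (rule mult_right_mono)
      then show ?thesis by (simp add: ac_simps)
    qed
    have "N * (N - 1) * (P - 1/N) = N * ((N - 1) * P) - (N - 1)" using N0 by (simp add: field_simps)
    also have "\<dots> \<ge> N * 1 - (N - 1)" using PN1 N0 by (intro diff_right_mono mult_left_mono) auto
    finally have "1 \<le> N * (N - 1) * (P - 1/N)" by simp
    then have "\<beta> \<le> \<beta> * (N * (N - 1) * (P - 1/N))" using b0 by simp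
    moreover have "2 * r * (N * (N - 1)) < \<beta>" using rb by (simp add: N_def)
    ultimately show False using c1 by linarith
  qed
  have spos: "0 < s k * z$k" for k
  proof -
    have ge: "0 \<le> s k * z$k" using zK by (simp add: K_def)
    have ne: "s k * z$k \<noteq> 0" using nzero[of k] by (simp add: s_def)
    show ?thesis by (rule order.not_eq_order_implies_strict[OF ne[symmetric] ge])
  qed
  define e where "e = Min (range (\<lambda>k. \<bar>z$k\<bar>))"
  have e0: "e > 0" unfolding e_def using nzero by (subst Min_gr_iff) auto
  have ele: "e \<le> \<bar>z$k\<bar>" for k unfolding e_def by (rule Min_le) auto
  have zM: "z \<in> M"
    unfolding local_minimizers_on_def
  proof (intro CollectI conjI exI[of _ e] ballI impI e0)
    show "z \<in> sphere 0 1" using nz by simp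
    fix w :: "real^'n" assume wS: "w \<in> sphere 0 1" and dw: "dist w z < e"
    have "w \<in> K" unfolding K_def
    proof (intro IntI CollectI allI wS)
      fix k
      have "\<bar>(w - z)$k\<bar> \<le> norm (w - z)" by (rule component_le_norm_cart)
      also have "\<dots> < e" using dw by (simp add: dist_norm)
      finally have "\<bar>w$k - z$k\<bar> < \<bar>z$k\<bar>" using ele[of k] by simp
      then show "0 \<le> s k * w$k" using spos[of k] by (auto simp: s_def abs_if split: if_splits)
    qed
    then show "g z \<le> g w" by (rule zmin)
  qed
  moreover have "{k. 0 < z$k} = T"
  proof (rule set_eqI)
    fix k
    show "k \<in> {k. 0 < z$k} \<longleftrightarrow> k \<in> T"
    proof (cases "k \<in> T")
      case True then show ?thesis using spos[of k] by (simp add: s_def)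
    next
      case False then show ?thesis using spos[of k] by (simp add: s_def)
    qed
  qed
  ultimately show ?thesis by blast
qed

end


context qsetup begin

lemma count_lower:
  assumes rb: "2 * r * (real CARD('n) * (real CARD('n) - 1)) < \<beta>"
  shows "infinite M \<or> 2 ^ CARD('n) \<le> card M"
proof (cases "finite M")
  case False then show ?thesis by simp
next
  case True
  then have fin: "finite M" .
  define F where "F T = (SOME z. z \<in> M \<and> {k. 0 < z$k} = T)" for T :: "'n set"
  have F: "F T \<in> M \<and> {k. 0 < F T $ k} = T" for T
  proof -
    have "\<exists>z. z \<in> M \<and> {k. 0 < z$k} = T" using exists_min[OF rb, of T] by blast
    then show ?thesis unfolding F_def by (rule someI_ex)
  qed
  have injF: "inj_on F UNIV"
  proof (rule inj_onI)
    fix a b assume "a \<in> UNIV" "b \<in> UNIV" "F a = F b"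
    then have "{k. 0 < F a $ k} = {k. 0 < F b $ k}" by simp
    then show "a = b" using F[of a] F[of b] by simp
  qed
  have subF: "F ` UNIV \<subseteq> M" using F by auto
  have "card (UNIV :: 'n set set) \<le> card M" by (rule card_inj_on_le[OF injF subF fin])
  moreover have "card (UNIV :: 'n set set) = 2 ^ CARD('n)"
    using card_Pow[of "UNIV :: 'n set"] by simp
  ultimately show ?thesis by simp
qed

lemma count_exact:
  assumes rb: "2 * r * (real CARD('n) * (real CARD('n) - 1)) < \<beta>"
    and rb1: "2 * r * real CARD('n) \<le> \<beta>" and rb2: "(real CARD('n) - 1) * r < \<beta>"
    and rb3: "r * (real CARD('n) * (21 * real CARD('n) + 2)) < \<beta>"
  shows "finite M \<and> card M = 2 ^ CARD('n)"
proof -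
  define h where "h z = {k. 0 < z$k}" for z :: "real^'n"
  have inj: "inj_on h M"
  proof (rule inj_onI)
    fix z y assume zM: "z \<in> M" and yM: "y \<in> M" and hh: "h z = h y"
    have sg: "0 < z$k \<longleftrightarrow> 0 < y$k" for k using hh by (auto simp: h_def set_eq_iff)
    show "z = y" by (rule unique[OF zM yM sg rb1 rb2 rb3])
  qed
  have finim: "finite (h ` M)" by simp
  then have fin: "finite M" by (rule finite_imageD[OF _ inj])
  have "card M = card (h ` M)" using card_image[OF inj] by simp
  also have "\<dots> \<le> card (UNIV :: 'n set set)" by (rule card_mono) auto
  also have "\<dots> = 2 ^ CARD('n)" using card_Pow[of "UNIV :: 'n set"] by simp
  finally have "card M \<le> 2 ^ CARD('n)" .
  moreover have "2 ^ CARD('n) \<le> card M" using count_lower[OF rb] fin by simp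
  ultimately show ?thesis using fin by simp
qed

end

lemma bil_bound:
  fixes C :: "real^'n^'n"
  assumes sym: "transpose C = C" and unit: "\<And>x. norm x = 1 \<Longrightarrow> \<bar>x \<bullet> (C *v x)\<bar> \<le> r"
  shows "\<bar>x \<bullet> (C *v y)\<bar> \<le> r * norm x * norm y"
proof -
  have unit2: "\<bar>x \<bullet> (C *v y)\<bar> \<le> r" if nx: "norm x = 1" and ny: "norm y = 1" for x y
  proof -
    have xx: "x \<bullet> x = 1" using nx by (simp add: dot_square_norm)
    have yy: "y \<bullet> y = 1" using ny by (simp add: dot_square_norm)
    have e1: "(x + y) \<bullet> (C *v (x + y)) = x \<bullet> (C *v x) + 2*(y \<bullet> (C *v x)) + (y \<bullet> (C *v y))"
      using quad_expand[OF sym, of x 1 y] by simp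
    have e2: "(x - y) \<bullet> (C *v (x - y)) = x \<bullet> (C *v x) - 2*(y \<bullet> (C *v x)) + (y \<bullet> (C *v y))"
      using quad_expand[OF sym, of x "-1" y] by simp
    have s: "y \<bullet> (C *v x) = x \<bullet> (C *v y)" by (rule sym_inner[OF sym])
    have b1: "\<bar>(x + y) \<bullet> (C *v (x + y))\<bar> \<le> r * ((x + y) \<bullet> (x + y))"
    proof (cases "x + y = 0")
      case True then show ?thesis by simp
    next
      case False
      define u where "u = (1 / norm (x + y)) *\<^sub>R (x + y)"
      have "norm u = 1" using False by (simp add: u_def)
      then have "\<bar>u \<bullet> (C *v u)\<bar> \<le> r" by (rule unit)
      moreover have "u \<bullet> (C *v u) = ((x + y) \<bullet> (C *v (x + y))) / (norm (x + y))^2"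
        by (simp add: u_def matrix_vector_mult_scaleR power2_eq_square)
      ultimately have "\<bar>(x + y) \<bullet> (C *v (x + y))\<bar> / (norm (x + y))^2 \<le> r" by (simp add: abs_div_pos)
      then show ?thesis using False by (simp add: divide_le_eq dot_square_norm mult.commute)
    qed
    have b2: "\<bar>(x - y) \<bullet> (C *v (x - y))\<bar> \<le> r * ((x - y) \<bullet> (x - y))"
    proof (cases "x - y = 0")
      case True then show ?thesis by simp
    next
      case False
      define u where "u = (1 / norm (x - y)) *\<^sub>R (x - y)"
      have "norm u = 1" using False by (simp add: u_def)
      then have "\<bar>u \<bullet> (C *v u)\<bar> \<le> r" by (rule unit)
      moreover have "u \<bullet> (C *v u) = ((x - y) \<bullet> (C *v (x - y))) / (norm (x - y))^2"
        by (simp add: u_def matrix_vector_mult_scaleR power2_eq_square)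
      ultimately have "\<bar>(x - y) \<bullet> (C *v (x - y))\<bar> / (norm (x - y))^2 \<le> r" by (simp add: abs_div_pos)
      then show ?thesis using False by (simp add: divide_le_eq dot_square_norm mult.commute)
    qed
    have p1: "(x + y) \<bullet> (x + y) = 2 + 2*(x \<bullet> y)" using xx yy by (simp add: inner_add_left inner_add_right inner_commute)
    have p2: "(x - y) \<bullet> (x - y) = 2 - 2*(x \<bullet> y)" using xx yy by (simp add: inner_diff_left inner_diff_right inner_commute)
    have "4 * (x \<bullet> (C *v y)) = (x + y) \<bullet> (C *v (x + y)) - (x - y) \<bullet> (C *v (x - y))"
      using e1 e2 s by (simp add: algebra_simps)
    then have "\<bar>4 * (x \<bullet> (C *v y))\<bar> \<le> r * ((x + y) \<bullet> (x + y)) + r * ((x - y) \<bullet> (x - y))"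
      using b1 b2 by linarith
    also have "\<dots> = 4 * r" unfolding p1 p2 by (simp add: algebra_simps)
    finally show ?thesis by simp
  qed
  show ?thesis
  proof (cases "x = 0 \<or> y = 0")
    case True then show ?thesis
    proof
      assume "x = 0" then show ?thesis by simp
    next
      assume "y = 0" then show ?thesis by simp
    qed
  next
    case False
    define x' where "x' = (1 / norm x) *\<^sub>R x"
    define y' where "y' = (1 / norm y) *\<^sub>R y"
    have "norm x' = 1" "norm y' = 1" using False by (auto simp: x'_def y'_def)
    then have "\<bar>x' \<bullet> (C *v y')\<bar> \<le> r" by (rule unit2)
    moreover have "x' \<bullet> (C *v y') = (x \<bullet> (C *v y)) / (norm x * norm y)"
      by (simp add: x'_def y'_def matrix_vector_mult_scaleR)
    moreover have pp: "norm x * norm y > 0" using False by simp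
    ultimately have "\<bar>x \<bullet> (C *v y)\<bar> / (norm x * norm y) \<le> r" by (simp only: abs_divide abs_of_pos[OF pp])
    then have "\<bar>x \<bullet> (C *v y)\<bar> \<le> r * (norm x * norm y)" using \<open>norm x * norm y > 0\<close> by (simp add: pos_divide_le_eq)
    then show ?thesis by (simp add: mult.assoc)
  qed
qed

lemma lm_shift:
  assumes "\<And>z. z \<in> S \<Longrightarrow> f z = h z + c"
  shows "local_minimizers_on f S = local_minimizers_on h S"
  unfolding local_minimizers_on_def using assms by auto


theorem corollary1:
  fixes A :: "real^'n^'n" and \<beta> :: real
  assumes "CARD('n) \<ge> 2"
    and "transpose A = A"
    and "\<beta> > 0"
  shows "(\<beta> > (lambda_max A - lambda_min A) * real (CARD('n))^2 \<longrightarrow>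
           infinite (local_minimizers_on (quartic_obj A \<beta>) (sphere 0 1))
           \<or> card (local_minimizers_on (quartic_obj A \<beta>) (sphere 0 1)) \<ge> 2 ^ CARD('n))
       \<and> (\<beta> > 18 * real (CARD('n))^3 / (real (CARD('n)) - 1) * (lambda_max A - lambda_min A) \<longrightarrow>
           finite (local_minimizers_on (quartic_obj A \<beta>) (sphere 0 1))
           \<and> card (local_minimizers_on (quartic_obj A \<beta>) (sphere 0 1)) = 2 ^ CARD('n))"
proof -
  define N where "N = real CARD('n)"
  define lM where "lM = lambda_max A"
  define lm where "lm = lambda_min A"
  have eb: "lm \<le> x \<bullet> (A *v x) \<and> x \<bullet> (A *v x) \<le> lM" if "norm x = 1" for x
    using eig_bounds[OF assms(2) that] by (simp add: lM_def lm_def)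
  define r where "r = (lM - lm)/2"
  define c where "c = (lM + lm)/2"
  obtain i :: 'n where True by simp
  have r0: "0 \<le> r" using eb[of "axis i 1"] by (simp add: r_def norm_axis_1)
  define C where "C = A - mat c"
  have symC: "transpose C = C" by (simp add: C_def transpose_diff transpose_mat assms(2))
  have Cq: "z \<bullet> (C *v z) = z \<bullet> (A *v z) - c * (z \<bullet> z)" for z
    by (simp add: C_def matrix_vector_mult_diff_rdistrib mat_mult_vec inner_diff_right)
  have unitC: "\<bar>x \<bullet> (C *v x)\<bar> \<le> r" if "norm x = 1" for x
  proof -
    have "x \<bullet> x = 1" using that by (simp add: dot_square_norm)
    then have e: "x \<bullet> (C *v x) = x \<bullet> (A *v x) - c" using Cq[of x] by simp
    have h1: "lm \<le> x \<bullet> (A *v x)" and h2: "x \<bullet> (A *v x) \<le> lM" using eb[OF that] by auto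
    have "x \<bullet> (A *v x) - c \<le> r" using h2 by (simp add: r_def c_def field_simps)
    moreover have "- (x \<bullet> (A *v x) - c) \<le> r" using h1 by (simp add: r_def c_def field_simps)
    ultimately show ?thesis unfolding e by (simp add: abs_le_iff)
  qed
  have bnd: "\<bar>x \<bullet> (C *v y)\<bar> \<le> r * norm x * norm y" for x y
    by (rule bil_bound[OF symC unitC])
  interpret Q: qsetup C \<beta> r
    by unfold_locales (auto simp: symC bnd r0 assms(3))
  have Meq: "local_minimizers_on (quartic_obj A \<beta>) (sphere 0 1) = Q.M"
  proof (rule lm_shift)
    fix z :: "real^'n" assume "z \<in> sphere 0 1"
    then have "z \<bullet> z = 1" by (simp add: dot_square_norm)
    then have e: "z \<bullet> (C *v z) = z \<bullet> (A *v z) - c" using Cq[of z] by simp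
    show "quartic_obj A \<beta> z = quartic_obj C \<beta> z + c/2"
      unfolding quartic_obj_def e by (simp add: algebra_simps)
  qed
  have rho: "lambda_max A - lambda_min A = 2 * r" by (simp add: r_def lM_def lm_def)
  have N2: "2 \<le> N" using assms(1) by (simp add: N_def)
  have NN: "0 \<le> N * N" by simp
  show ?thesis
    unfolding Meq rho N_def[symmetric]
  proof (intro conjI impI)
    assume h1: "2 * r * N^2 < \<beta>"
    have "r * (2 * (N * (N - 1))) \<le> r * (2 * N^2)"
      using r0 N2 by (intro mult_left_mono) (auto simp: power2_eq_square algebra_simps)
    then have "2 * r * (N * (N - 1)) < \<beta>" using h1 by (simp add: algebra_simps)
    then show "infinite Q.M \<or> 2 ^ CARD('n) \<le> card Q.M" using Q.count_lower by (simp add: N_def)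
  next
    assume h2: "18 * N^3 / (N - 1) * (2 * r) < \<beta>"
    have N1: "N - 1 > 0" using N2 by simp
    have "N^2 \<le> N^3 / (N - 1)"
    proof -
      have "N^2 * (N - 1) \<le> N^3" using NN by (simp add: power2_eq_square power3_eq_cube algebra_simps)
      then show ?thesis using N1 by (simp add: le_divide_eq)
    qed
    then have "r * (36 * N^2) \<le> r * (36 * (N^3 / (N - 1)))" using r0 by (intro mult_left_mono) auto
    then have hb: "r * (36 * N^2) < \<beta>" using h2 by (simp add: algebra_simps)
    have le: "r * X \<le> r * (36 * N^2)" if "X \<le> 36 * N^2" for X
      using that r0 by (rule mult_left_mono)
    have NN2: "2 * N \<le> N * N" using mult_right_mono[OF N2, of N] N2 by simp
    have x1: "2 * (N * (N - 1)) \<le> 36 * N^2" using NN2 NN N2 by (simp add: power2_eq_square algebra_simps; linarith)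
    have x2: "2 * N \<le> 36 * N^2" using NN2 NN N2 by (simp add: power2_eq_square algebra_simps; linarith)
    have x3: "N - 1 \<le> 36 * N^2" using NN2 NN N2 by (simp add: power2_eq_square algebra_simps; linarith)
    have x4: "N * (21 * N + 2) \<le> 36 * N^2" using NN2 NN N2 by (simp add: power2_eq_square algebra_simps; linarith)
    have rb: "2 * r * (N * (N - 1)) < \<beta>"
    proof -
      have "r * (2 * (N * (N - 1))) \<le> r * (36 * N^2)" by (rule le[OF x1])
      moreover have "2 * r * (N * (N - 1)) = r * (2 * (N * (N - 1)))" by (simp only: mult_ac)
      ultimately show ?thesis using hb by linarith
    qed
    have rb1: "2 * r * N \<le> \<beta>"
    proof -
      have "r * (2 * N) \<le> r * (36 * N^2)" by (rule le[OF x2])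
      moreover have "2 * r * N = r * (2 * N)" by (simp only: mult_ac)
      ultimately show ?thesis using hb by linarith
    qed
    have rb2: "(N - 1) * r < \<beta>"
    proof -
      have "r * (N - 1) \<le> r * (36 * N^2)" by (rule le[OF x3])
      moreover have "(N - 1) * r = r * (N - 1)" by (simp only: mult_ac)
      ultimately show ?thesis using hb by linarith
    qed
    have rb3: "r * (N * (21 * N + 2)) < \<beta>"
    proof -
      have "r * (N * (21 * N + 2)) \<le> r * (36 * N^2)" by (rule le[OF x4])
      then show ?thesis using hb by linarith
    qed
    have fc: "finite Q.M \<and> card Q.M = 2 ^ CARD('n)"
      using Q.count_exact rb rb1 rb2 rb3 by (simp add: N_def)
    then show "finite Q.M" by simp
    from fc show "card Q.M = 2 ^ CARD('n)" by simp
  qed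
qed

end
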